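(* Let $G$ be a graph, $t\ge 2$ an integer and $k$ a nonnegative integer. For a set of vertices $X$, let $E_X$ denote the set of all pairs $\{u,v\}$ with $u,v\in X$, $u\neq v$. Let $\mathcal{F}'$ be a family of sets of the form $E_Z$ with $Z\subseteq V(G)$, such that for every edge $\{x,y\}$ of $G$, the family $\mathcal{F}'_{xy}=\{X\subseteq V(G)\setminus\{x,y\} : E_{X\cup\{x,y\}}\in\mathcal{F}'\}$ satisfies $|\mathcal{F}'_{xy}|\le 2\cdot(t-2)!\cdot k^{t-2}$. If $|\mathcal{F}'|>2\cdot(t-2)!\cdot k^{t-1}$, then $\mathcal{F}'$ has no hitting set consisting of at most $k$ edges of $G$.
   Context: A set $S$ is a hitting set of a family $\mathcal{F}$ of sets if $S\cap F\neq\emptyset$ for every $F\in\mathcal{F}$. (In the paper this is phrased as: after exhaustively applying the sunflower reduction rule, so that $|\mathcal{F}'_{xy}|\le 2(t-2)!k^{t-2}$ for every edge, the rule "if $|\mathcal{F}'|>2(t-2)!k^{t-1}$, return a fixed no-instance" is safe.) *)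

theory Defs
  imports Main
begin

definition simple_graph :: "'a set \<Rightarrow> 'a set set \<Rightarrow> bool" where
  "simple_graph V E \<longleftrightarrow> finite V \<and>
     (\<forall>e\<in>E. \<exists>u v. e = {u, v} \<and> u \<noteq> v \<and> u \<in> V \<and> v \<in> V)"

definition pairs_of :: "'a set \<Rightarrow> 'a set set" where
  "pairs_of X = {{u, v} | u v. u \<in> X \<and> v \<in> X \<and> u \<noteq> v}"

definition hitting_set :: "'b set \<Rightarrow> 'b set set \<Rightarrow> bool" where
  "hitting_set S F \<longleftrightarrow> (\<forall>A\<in>F. S \<inter> A \<noteq> {})"

definition link_family :: "'a set \<Rightarrow> 'a set set set \<Rightarrow> 'a \<Rightarrow> 'a \<Rightarrow> 'a set set" where
  "link_family V F x y = {X. X \<subseteq> V - {x, y} \<and> pairs_of (X \<union> {x, y}) \<in> F}"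

end

theory Submission
  imports Defs
begin

lemma pair_in_pairs_of:
  assumes "{x, y} \<in> pairs_of Z"
  shows "x \<in> Z \<and> y \<in> Z"
  proof -
  obtain u v where "{x, y} = {u, v}" "u \<in> Z" "v \<in> Z" using assms unfolding pairs_of_def by blast
  then show ?thesis by (metis doubleton_eq_iff)
qed

lemma G_sub:
  assumes F: "\<forall>A\<in>F. \<exists>Z. Z \<subseteq> V \<and> A = pairs_of Z"
  shows "{A \<in> F. {x, y} \<in> A} \<subseteq> (\<lambda>X. pairs_of (X \<union> {x, y})) ` link_family V F x y"
proof
  fix A assume "A \<in> {A \<in> F. {x, y} \<in> A}"
  then have A: "A \<in> F" "{x, y} \<in> A" by auto
  then obtain Z where Z: "Z \<subseteq> V" "A = pairs_of Z" using F by blast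
  then have xy: "x \<in> Z" "y \<in> Z" using A pair_in_pairs_of by metis+
  have e: "Z - {x, y} \<union> {x, y} = Z" using xy by auto
  have "Z - {x, y} \<in> link_family V F x y"
    unfolding link_family_def using Z A e by auto
  then show "A \<in> (\<lambda>X. pairs_of (X \<union> {x, y})) ` link_family V F x y"
    using e Z by (metis (no_types, lifting) image_eqI)
qed

theorem lemma3:
  fixes V :: "'a set" and E :: "'a set set" and F :: "'a set set set"
    and t k :: nat
  assumes "simple_graph V E"
    and "t \<ge> 2"
    and "\<forall>A\<in>F. \<exists>Z. Z \<subseteq> V \<and> A = pairs_of Z"
    and "\<forall>x y. {x, y} \<in> E \<longrightarrow>
           card (link_family V F x y) \<le> 2 * fact (t - 2) * k ^ (t - 2)"
    and "card F > 2 * fact (t - 2) * k ^ (t - 1)"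
  shows "\<not> (\<exists>S. S \<subseteq> E \<and> card S \<le> k \<and> hitting_set S F)"
proof
  assume "\<exists>S. S \<subseteq> E \<and> card S \<le> k \<and> hitting_set S F"
  then obtain S where S: "S \<subseteq> E" "card S \<le> k" "hitting_set S F" by blast
  define B :: nat where "B = 2 * fact (t - 2) * k ^ (t - 2)"
  have finV: "finite V" using assms(1) unfolding simple_graph_def by blast
  have "E \<subseteq> Pow V"
  proof
    fix e assume "e \<in> E"
    then obtain u v where "e = {u, v}" "u \<in> V" "v \<in> V" using assms(1) unfolding simple_graph_def by blast
    then show "e \<in> Pow V" by simp
  qed
  then have finE: "finite E" using finV by (meson finite_Pow_iff finite_subset)
  then have finS: "finite S" using S(1) by (rule finite_subset[rotated])
  have finF: "finite F"
  proof (rule ccontr)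
    assume "infinite F" then have "card F = 0" by simp
    then show False using assms(5) by linarith
  qed
  have cover: "F \<subseteq> (\<Union>e\<in>S. {A \<in> F. e \<in> A})"
    using S(3) unfolding hitting_set_def by blast
  have each: "card {A \<in> F. e \<in> A} \<le> B" if "e \<in> S" for e
  proof -
    obtain x y where e: "e = {x, y}" using assms(1) S(1) \<open>e \<in> S\<close>
      unfolding simple_graph_def by blast
    have "finite (link_family V F x y)"
      proof (rule finite_subset)
      show "link_family V F x y \<subseteq> Pow V" unfolding link_family_def by blast
    qed (use finV in simp)
    then have "card {A \<in> F. e \<in> A} \<le> card ((\<lambda>X. pairs_of (X \<union> {x, y})) ` link_family V F x y)"
      using G_sub[OF assms(3)] e by (intro card_mono) auto
    also have "\<dots> \<le> card (link_family V F x y)" by (rule card_image_le) fact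
    also have "\<dots> \<le> B" unfolding B_def using assms(4) S(1) \<open>e \<in> S\<close> e by auto
    finally show ?thesis .
  qed
  have "card F \<le> card (\<Union>e\<in>S. {A \<in> F. e \<in> A})"
    using cover finS finF by (intro card_mono) auto
  also have "\<dots> \<le> (\<Sum>e\<in>S. card {A \<in> F. e \<in> A})" by (rule card_UN_le) fact
  also have "\<dots> \<le> (\<Sum>e\<in>S. B)" using each by (rule sum_mono)
  also have "\<dots> = card S * B" by simp
  also have "\<dots> \<le> k * B" using S(2) by (rule mult_right_mono) simp
  also have "\<dots> = 2 * fact (t - 2) * k ^ (t - 1)"
  proof -
    have "k * k ^ (t - 2) = k ^ (t - 1)" using assms(2)
      proof -
      have "t - 1 = Suc (t - 2)" using assms(2) by simp
      then show ?thesis by simp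
    qed
    then show ?thesis unfolding B_def by (simp add: ac_simps)
  qed
  finally show False using assms(5) by simp
qed

end
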